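(* Let $M$ be a finite-dimensional simple $YQ(1)$-module on which each central element $Z_{2i}$ ($i\ge0$) acts by a scalar $\chi_{2i}$, and set $\chi(u)=\sum_{i\ge0}\chi_{2i}u^{-2i-1}$. Then $\chi(u)$ is a rational function of the form $\frac{a_0u^{-1}+\dots+a_pu^{-2p-1}}{1+c_1u^{-2}+\dots+c_qu^{-2q}}$ for some $p,q\ge0$ and $a_i,c_j\in\mathbb C$ (equality of formal power series in $u^{-1}$).
   Context: $YQ(1)$ is the associative unital superalgebra over $\mathbb C$ generated by $T_{i,j}^{(m)}$, $m\geq1$, $i,j\in\{1,-1\}$, of parity $p(i)+p(j)$ where $p(1)=0$, $p(-1)=1$. With $T_{i,j}(u)=\delta_{ij}+\sum_{m\ge1}T^{(m)}_{i,j}u^{-m}$, the defining relations are, for all $i,j,k,l$: $(u^2-v^2)[T_{i,j}(u),T_{k,l}(v)](-1)^{p(i)p(k)+p(i)p(l)+p(k)p(l)}=(u+v)(T_{k,j}(u)T_{i,l}(v)-T_{k,j}(v)T_{i,l}(u))-(u-v)(T_{-k,j}(u)T_{-i,l}(v)-T_{k,-j}(v)T_{i,-l}(u))(-1)^{p(k)+p(l)}$, and $T_{i,j}(-u)=T_{-i,-j}(u)$ (supercommutators). Set $\eta_i=(-\tfrac12)^i(\operatorname{ad}T^{(2)}_{1,1})^i(T^{(1)}_{1,-1})$ and $Z_{2i}=\frac12[\eta_0,\eta_{2i}]$; the $Z_{2i}$ are central in $YQ(1)$. *)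

theory Defs
  imports "HOL-Analysis.Analysis" "HOL-Computational_Algebra.Formal_Power_Series"
begin

definition yq_idx :: "int set" where "yq_idx = {1, -1}"

definition ipar :: "int \<Rightarrow> nat" where "ipar i = (if i = -1 then 1 else 0)"

definition msc :: "complex \<Rightarrow> complex^'n^'n \<Rightarrow> complex^'n^'n" where
  "msc c X = (\<chi> a b. c * X $ a $ b)"

definition scomm :: "nat \<Rightarrow> nat \<Rightarrow> complex^'n^'n \<Rightarrow> complex^'n^'n \<Rightarrow> complex^'n^'n" where
  "scomm d e X Y = (if even (d * e) then X ** Y - Y ** X else X ** Y + Y ** X)"

text \<open>Coefficients of the series T_ij(u) = delta_ij + sum_{m>=1} T_ij^(m) u^-m,
  extended by zero to negative indices.\<close>
definition Tc :: "(int \<Rightarrow> int \<Rightarrow> nat \<Rightarrow> complex^'n^'n) \<Rightarrow> int \<Rightarrow> int \<Rightarrow> int \<Rightarrow> complex^'n^'n" where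
  "Tc T i j m = (if m < 0 then 0 else if m = 0 then (if i = j then mat 1 else 0) else T i j (nat m))"

text \<open>A homogeneous operator of parity d on a super vector space with homogeneous basis
  indexed by 'n, the basis vector a having parity par a (True = odd).\<close>
definition homog :: "('n \<Rightarrow> bool) \<Rightarrow> nat \<Rightarrow> complex^'n^'n \<Rightarrow> bool" where
  "homog par d X = (\<forall>a b. X $ a $ b \<noteq> 0 \<longrightarrow> ((par a \<noteq> par b) \<longleftrightarrow> odd d))"

text \<open>Coefficient of u^-r v^-s in the defining relation (all r s :: int).\<close>
definition yq_rel :: "(int \<Rightarrow> int \<Rightarrow> nat \<Rightarrow> complex^'n^'n) \<Rightarrow> int \<Rightarrow> int \<Rightarrow> int \<Rightarrow> int \<Rightarrow> int \<Rightarrow> int \<Rightarrow> bool" where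
  "yq_rel T i j k l r s =
    (let pij = ipar i + ipar j; pkl = ipar k + ipar l;
         sg = (if even (ipar i * ipar k + ipar i * ipar l + ipar k * ipar l) then 1 else -1 :: complex);
         sg2 = (if even (ipar k + ipar l) then 1 else -1 :: complex)
     in msc sg (scomm pij pkl (Tc T i j (r + 2)) (Tc T k l s)
                - scomm pij pkl (Tc T i j r) (Tc T k l (s + 2)))
        = (Tc T k j (r + 1) ** Tc T i l s - Tc T k j s ** Tc T i l (r + 1))
          + (Tc T k j r ** Tc T i l (s + 1) - Tc T k j (s + 1) ** Tc T i l r)
          - msc sg2 ((Tc T (-k) j (r + 1) ** Tc T (-i) l s - Tc T k (-j) s ** Tc T i (-l) (r + 1))
                     - (Tc T (-k) j r ** Tc T (-i) l (s + 1) - Tc T k (-j) (s + 1) ** Tc T i (-l) r)))"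

text \<open>The operators T i j m (m \<ge> 1) define a finite-dimensional YQ(1)-supermodule structure
  on C^'n with homogeneous basis of parities par.\<close>
definition yq1_module :: "('n::finite \<Rightarrow> bool) \<Rightarrow> (int \<Rightarrow> int \<Rightarrow> nat \<Rightarrow> complex^'n^'n) \<Rightarrow> bool" where
  "yq1_module par T =
    ((\<forall>i\<in>yq_idx. \<forall>j\<in>yq_idx. \<forall>m\<ge>1. homog par (ipar i + ipar j) (T i j m))
     \<and> (\<forall>i\<in>yq_idx. \<forall>j\<in>yq_idx. \<forall>k\<in>yq_idx. \<forall>l\<in>yq_idx. \<forall>r s. yq_rel T i j k l r s)
     \<and> (\<forall>i\<in>yq_idx. \<forall>j\<in>yq_idx. \<forall>m\<ge>1. msc ((-1) ^ m) (T i j m) = T (-i) (-j) m))"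

definition csubspace_v :: "(complex^'n) set \<Rightarrow> bool" where
  "csubspace_v W = (0 \<in> W \<and> (\<forall>x\<in>W. \<forall>y\<in>W. x + y \<in> W) \<and> (\<forall>c. \<forall>x\<in>W. (\<chi> a. c * x $ a) \<in> W))"

text \<open>Simple supermodule: no graded submodules other than 0 and the whole space.\<close>
definition yq1_simple :: "('n::finite \<Rightarrow> bool) \<Rightarrow> (int \<Rightarrow> int \<Rightarrow> nat \<Rightarrow> complex^'n^'n) \<Rightarrow> bool" where
  "yq1_simple par T =
    (\<forall>W. csubspace_v W
        \<and> (\<forall>w\<in>W. (\<chi> a. if par a then 0 else w $ a) \<in> W)
        \<and> (\<forall>i\<in>yq_idx. \<forall>j\<in>yq_idx. \<forall>m\<ge>1. \<forall>w\<in>W. T i j m *v w \<in> W)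
        \<longrightarrow> W = {0} \<or> W = UNIV)"

definition yq_eta :: "(int \<Rightarrow> int \<Rightarrow> nat \<Rightarrow> complex^'n^'n) \<Rightarrow> nat \<Rightarrow> complex^'n^'n" where
  "yq_eta T k = msc ((-1/2) ^ k)
     (((\<lambda>Y. scomm 0 1 (T 1 1 2) Y) ^^ k) (T 1 (-1) 1))"

definition yq_Z :: "(int \<Rightarrow> int \<Rightarrow> nat \<Rightarrow> complex^'n^'n) \<Rightarrow> nat \<Rightarrow> complex^'n^'n" where
  "yq_Z T i = msc (1/2) (scomm 1 1 (yq_eta T 0) (yq_eta T (2 * i)))"

end

theory Submission
  imports Defs
begin


lemma linear_funpow: "linear (E::'a::real_vector \<Rightarrow> 'a) \<Longrightarrow> linear (E ^^ n)"
  by (induction n) (auto intro: linear_compose linear_id simp: id_def[symmetric])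

lemma span_range_sum:
  fixes f :: "nat \<Rightarrow> 'a::real_vector"
  shows "x \<in> span (f ` {..<k}) \<Longrightarrow> \<exists>\<beta>. x = (\<Sum>j<k. \<beta> j *\<^sub>R f j)"
proof (induction k arbitrary: x)
  case 0
  then show ?case by simp
next
  case (Suc k)
  have "f ` {..<Suc k} = insert (f k) (f ` {..<k})"
    by (simp add: lessThan_Suc)
  with Suc.prems have "x \<in> span (insert (f k) (f ` {..<k}))" by simp
  then obtain c where "x - c *\<^sub>R f k \<in> span (f ` {..<k})"
    unfolding span_insert by blast
  then obtain \<beta> where b: "x - c *\<^sub>R f k = (\<Sum>j<k. \<beta> j *\<^sub>R f j)" using Suc.IH by blast
  have "(\<Sum>j<Suc k. (\<beta>(k := c)) j *\<^sub>R f j) = (\<Sum>j<k. \<beta> j *\<^sub>R f j) + c *\<^sub>R f k"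
    by (simp add: sum.lessThan_Suc)
  then show ?case using b by (metis add_diff_cancel_right' diff_add_cancel)
qed

lemma exists_dep:
  fixes f :: "nat \<Rightarrow> 'a::euclidean_space"
  shows "\<exists>k. f k \<in> span (f ` {..<k})"
proof (rule ccontr)
  assume H: "\<not> ?thesis"
  have "independent (f ` {..<k}) \<and> card (f ` {..<k}) = k" for k
  proof (induction k)
    case 0
    then show ?case by (simp add: independent_empty)
  next
    case (Suc k)
    have im: "f ` {..<Suc k} = insert (f k) (f ` {..<k})"
      by (simp add: lessThan_Suc)
    have ns: "f k \<notin> span (f ` {..<k})" using H by blast
    hence nin: "f k \<notin> f ` {..<k}" by (metis span_base)
    have "independent (insert (f k) (f ` {..<k}))"
      using independent_insertI[OF ns] Suc.IH by blast
    moreover have "card (insert (f k) (f ` {..<k})) = Suc k"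
      using nin Suc.IH by (simp add: card_insert_disjoint)
    ultimately show ?case unfolding im by blast
  qed
  from this[of "Suc DIM('a)"] have ind: "independent (f ` {..<Suc DIM('a)})"
    and c: "card (f ` {..<Suc DIM('a)}) = Suc DIM('a)" by auto
  have "card (f ` {..<Suc DIM('a)}) \<le> DIM('a)" using independent_card_le[OF ind] .
  then show False using c by simp
qed

lemma lin_rec:
  fixes E :: "'a::euclidean_space \<Rightarrow> 'a" and L :: "'a \<Rightarrow> complex"
  assumes "linear E" "linear L"
  shows "\<exists>k \<gamma>. \<forall>m. L ((E^^(m+k)) v) = (\<Sum>j<k. \<gamma> j * L ((E^^(m+j)) v))"
proof -
  obtain k where "(E^^k) v \<in> span ((\<lambda>j. (E^^j) v) ` {..<k})"
    using exists_dep[of "\<lambda>j. (E^^j) v"] by blast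
  then obtain \<beta> where b: "(E^^k) v = (\<Sum>j<k. \<beta> j *\<^sub>R (E^^j) v)"
    using span_range_sum by blast
  have "L ((E^^(m+k)) v) = (\<Sum>j<k. complex_of_real (\<beta> j) * L ((E^^(m+j)) v))" for m
  proof -
    have lm: "linear (E^^m)" using linear_funpow assms(1) by blast
    have "(E^^(m+k)) v = (E^^m) ((E^^k) v)" by (simp add: funpow_add)
    also have "\<dots> = (\<Sum>j<k. \<beta> j *\<^sub>R (E^^(m+j)) v)"
      unfolding b using lm by (simp add: linear_sum linear_scale funpow_add)
    finally have "L ((E^^(m+k)) v) = (\<Sum>j<k. \<beta> j *\<^sub>R L ((E^^(m+j)) v))"
      using assms(2) by (simp add: linear_sum linear_scale)
    then show ?thesis by (simp add: scaleR_conv_of_real)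
  qed
  then show ?thesis by (intro exI[of _ k] exI[of _ "\<lambda>j. complex_of_real (\<beta> j)"] allI)
qed



lemma sum_rev_1k: "(\<Sum>j\<in>{1..k}. g (k - j)) = (\<Sum>j<(k::nat). g j)"
  by (rule sum.reindex_bij_witness[of _ "\<lambda>j. k - j" "\<lambda>j. k - j"]) auto

lemma rec_rational:
  fixes s :: "nat \<Rightarrow> complex"
  assumes rec: "\<And>m. s (m + k) = (\<Sum>j<k. \<gamma> j * s (m + j))"
  shows "\<exists>(p::nat) (q::nat) (a::nat \<Rightarrow> complex) (c::nat \<Rightarrow> complex).
           Abs_fps (\<lambda>n. if odd n then s ((n - 1) div 2) else 0)
           = (\<Sum>i\<le>p. fps_const (a i) * fps_X ^ (2 * i + 1))
             / (1 + (\<Sum>j\<in>{1..q}. fps_const (c j) * fps_X ^ (2 * j)))"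
proof -
  define F where "F = Abs_fps (\<lambda>n. if odd n then s ((n - 1) div 2) else 0)"
  define c where "c j = - \<gamma> (k - j)" for j
  define Q where "Q = 1 + (\<Sum>j\<in>{1..k}. fps_const (c j) * fps_X ^ (2 * j))"
  define a where "a i = fps_nth (Q * F) (2 * i + 1)" for i
  have Q0: "fps_nth Q 0 = 1" unfolding Q_def by (simp add: fps_sum_nth)
  have QF: "fps_nth (Q * F) n = fps_nth F n + (\<Sum>j\<in>{1..k}. c j * (if n < 2 * j then 0 else fps_nth F (n - 2 * j)))" for n
  proof -
    have "Q * F = F + (\<Sum>j\<in>{1..k}. fps_const (c j) * (fps_X ^ (2 * j) * F))"
      unfolding Q_def by (simp add: distrib_right sum_distrib_right mult.assoc)
    then show ?thesis by (simp only: fps_add_nth fps_sum_nth fps_mult_left_const_nth fps_X_power_mult_nth)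
  qed
  have ev: "fps_nth (Q * F) n = 0" if "even n" for n
    unfolding QF using that by (auto simp: F_def intro!: sum.neutral)
  have big: "fps_nth (Q * F) n = 0" if "odd n" "(n - 1) div 2 \<ge> k" for n
  proof -
    have "n = 2 * ((n - 1) div 2) + 1" using that(1) by presburger
    then have "n = 2 * (((n - 1) div 2 - k) + k) + 1" using that(2) by simp
    then obtain m where m: "n = 2 * (m + k) + 1" by blast
    have "(\<Sum>j\<in>{1..k}. c j * (if n < 2 * j then 0 else fps_nth F (n - 2 * j)))
        = (\<Sum>j\<in>{1..k}. - (\<gamma> (k - j) * s (m + (k - j))))"
    proof (rule sum.cong)
      fix j assume j: "j \<in> {1..k}"
      have "n - 2 * j = 2 * (m + (k - j)) + 1" using j m by auto
      then show "c j * (if n < 2 * j then 0 else fps_nth F (n - 2 * j)) = - (\<gamma> (k - j) * s (m + (k - j)))"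
        using j m by (simp add: F_def c_def)
    qed simp
    also have "\<dots> = - (\<Sum>j<k. \<gamma> j * s (m + j))"
      using sum_rev_1k[where g = "\<lambda>i. \<gamma> i * s (m + i)" and k = k] by (simp only: sum_negf)
    finally show ?thesis unfolding QF using m rec[of m] by (simp add: F_def)
  qed
  have eq: "Q * F = (\<Sum>i\<le>k. fps_const (a i) * fps_X ^ (2 * i + 1))"
  proof (rule fps_ext)
    fix n
    have r: "fps_nth (\<Sum>i\<le>k. fps_const (a i) * fps_X ^ (2 * i + 1)) n
          = (\<Sum>i\<le>k. if n = 2 * i + 1 then a i else 0)"
      by (simp only: fps_sum_nth fps_mult_left_const_nth fps_X_power_nth) (auto intro!: sum.cong)
    show "fps_nth (Q * F) n = fps_nth (\<Sum>i\<le>k. fps_const (a i) * fps_X ^ (2 * i + 1)) n"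
    proof (cases "odd n")
      case True
      then obtain i where i: "n = 2 * i + 1" by (metis oddE)
      show ?thesis
      proof (cases "i \<le> k")
        case True
        have "(\<Sum>i'\<le>k. if n = 2 * i' + 1 then a i' else 0) = a i"
          using True i by (simp add: sum.delta[of "{..k}" i])
        then show ?thesis unfolding r using i by (simp add: a_def)
      next
        case False
        then show ?thesis unfolding r using i big[of n] by (auto intro!: sum.neutral)
      qed
    next
      case False
      then show ?thesis unfolding r using ev[of n] by (auto intro!: sum.neutral)
    qed
  qed
  have "F = (\<Sum>i\<le>k. fps_const (a i) * fps_X ^ (2 * i + 1)) / Q"
    unfolding eq[symmetric] using Q0 by (simp add: fps_divide_unit inverse_mult_eq_1' mult.assoc)
  then show ?thesis unfolding F_def Q_def by blast
qed

lemma msc_real: "msc (complex_of_real r) M = r *\<^sub>R M"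
  apply (simp only: msc_def vec_eq_iff vector_scaleR_component vec_lambda_beta)
  apply (simp add: scaleR_conv_of_real)
  done

lemma matrix_add_rdistrib': "((B::'a::semiring_1^'n^'m) + C) ** A = B ** A + C ** A"
  by (simp add: matrix_matrix_mult_def vec_eq_iff sum.distrib distrib_right)

theorem lemma5p3:
  fixes par :: "'n::finite \<Rightarrow> bool"
    and T :: "int \<Rightarrow> int \<Rightarrow> nat \<Rightarrow> complex^'n^'n"
    and chi :: "nat \<Rightarrow> complex"
  assumes "yq1_module par T"
    and "yq1_simple par T"
    and "\<And>i. yq_Z T i = mat (chi i)"
  shows "\<exists>(p::nat) (q::nat) (a::nat \<Rightarrow> complex) (c::nat \<Rightarrow> complex).
           Abs_fps (\<lambda>n. if odd n then chi ((n - 1) div 2) else 0)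
           = (\<Sum>i\<le>p. fps_const (a i) * fps_X ^ (2 * i + 1))
             / (1 + (\<Sum>j\<in>{1..q}. fps_const (c j) * fps_X ^ (2 * j)))"
proof -
  define X where "X = T 1 1 2"
  define Y where "Y = T 1 (-1) 1"
  define D where "D = (\<lambda>M::complex^'n^'n. X ** M - M ** X)"
  define E where "E = (\<lambda>M. (1/4::real) *\<^sub>R D (D M))"
  obtain a :: 'n where True by blast
  define L where "L = (\<lambda>M::complex^'n^'n. (1/2) * (Y ** M + M ** Y) $ a $ a)"
  have linD: "linear D"
    by (rule linearI) (simp_all add: D_def matrix_add_ldistrib matrix_add_rdistrib'
        matrix_scalar_ac scalar_matrix_assoc[symmetric] algebra_simps)
  have linE: "linear E"
    by (rule linearI) (simp_all add: E_def linear_add[OF linD] linear_scale[OF linD] algebra_simps)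
  have linL: "linear L"
  proof (rule linearI)
    fix b1 b2 :: "complex^'n^'n"
    show "L (b1 + b2) = L b1 + L b2"
      unfolding L_def matrix_add_ldistrib matrix_add_rdistrib' by (simp add: algebra_simps)
  next
    fix r :: real and b :: "complex^'n^'n"
    have "L (r *\<^sub>R b) = (1/2) * (r *\<^sub>R (Y ** b + b ** Y)) $ a $ a"
      unfolding L_def matrix_scalar_ac scalar_matrix_assoc[symmetric] scaleR_right_distrib ..
    also have "\<dots> = r *\<^sub>R L b"
      unfolding L_def vector_scaleR_component by (simp add: scaleR_conv_of_real)
    finally show "L (r *\<^sub>R b) = r *\<^sub>R L b" .
  qed
  have Dpow: "(E^^i) Y = ((1/4::real)^i) *\<^sub>R (D^^(2*i)) Y" for i
  proof (induction i)
    case 0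
    then show ?case by simp
  next
    case (Suc i)
    have "(E^^Suc i) Y = E ((E^^i) Y)" by simp
    also have "\<dots> = E (((1/4::real)^i) *\<^sub>R (D^^(2*i)) Y)" by (simp only: Suc)
    also have "\<dots> = (1/4::real) *\<^sub>R D (D (((1/4::real)^i) *\<^sub>R (D^^(2*i)) Y))"
      by (simp only: E_def)
    also have "\<dots> = ((1/4::real)^Suc i) *\<^sub>R (D^^(2*Suc i)) Y"
      by (simp add: linear_scale[OF linD])
    finally show ?case .
  qed
  have Deq: "(\<lambda>M. scomm 0 1 (T 1 1 2) M) = D"
    by (simp add: D_def X_def scomm_def fun_eq_iff)
  have eta0: "yq_eta T 0 = Y"
    by (simp add: yq_eta_def Y_def msc_def vec_eq_iff)
  have eta: "yq_eta T (2*i) = (E^^i) Y" for i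
  proof -
    have pw: "((-1/2::complex) ^ (2*i)) = complex_of_real ((1/4)^i)"
      by (simp add: power_mult power2_eq_square)
    have "yq_eta T (2*i) = msc ((-1/2::complex) ^ (2*i)) ((D^^(2*i)) Y)"
      unfolding yq_eta_def Deq Y_def ..
    also have "\<dots> = (E^^i) Y"
      unfolding pw msc_real Dpow ..
    finally show ?thesis .
  qed
  have chiL: "chi i = L ((E^^i) Y)" for i
  proof -
    have "chi i = yq_Z T i $ a $ a" using assms(3)[of i] by (simp add: mat_def)
    also have "\<dots> = (1/2) * (scomm 1 1 Y ((E^^i) Y)) $ a $ a"
      by (simp only: yq_Z_def eta0 eta msc_def vec_lambda_beta)
    also have "\<dots> = L ((E^^i) Y)"
      unfolding L_def scomm_def by simp
    finally show ?thesis .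
  qed
  obtain k \<gamma> where rec: "\<And>m. L ((E^^(m+k)) Y) = (\<Sum>j<k. \<gamma> j * L ((E^^(m+j)) Y))"
    using lin_rec[OF linE linL, of Y] by blast
  have "\<And>m. chi (m + k) = (\<Sum>j<k. \<gamma> j * chi (m + j))"
    unfolding chiL by (rule rec)
  then show ?thesis by (rule rec_rational)
qed

end
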